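(* Let $p$ be a prime and $n\ge1$, and let $A,B,Q\in\mathbb{L}_p^{n\times n}$ with $\det(Q)\neq0$ and $AQ=QB$. Then the linear cellular automaton over $(\mathbb{Z}/p\mathbb{Z})^n$ with associated matrix $A$ is positively expansive if and only if the linear cellular automaton over $(\mathbb{Z}/p\mathbb{Z})^n$ with associated matrix $B$ is positively expansive.
   Context: $\mathbb{L}_p=\mathbb{Z}/p\mathbb{Z}[X,X^{-1}]$. The linear cellular automaton over $(\mathbb{Z}/p\mathbb{Z})^n$ with associated matrix $\sum_{j=-r}^rA_jX^{-j}$ ($A_j\in(\mathbb{Z}/p\mathbb{Z})^{n\times n}$) is the map $\mathcal{F}$ on $((\mathbb{Z}/p\mathbb{Z})^n)^{\mathbb{Z}}$ with $\mathcal{F}(c)_i=\sum_{j=-r}^rA_jc_{i+j}$. The configuration space carries the metric $d(c,c')=2^{-\min\{|j|:c_j\neq c'_j\}}$ ($d(c,c)=0$). $\mathcal{F}$ is positively expansive if there is $\varepsilon>0$ such that for all configurations $c\neq c'$ there is $\ell\in\mathbb{N}$ with $d(\mathcal{F}^\ell(c),\mathcal{F}^\ell(c'))\geq\varepsilon$. *)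

theory Defs
  imports "HOL-Analysis.Analysis" "HOL-Computational_Algebra.Formal_Laurent_Series"
    "Berlekamp_Zassenhaus.Finite_Field"
begin

text \<open>Z/pZ is the type 'p mod_ring with 'p of class prime_card (CARD('p) = p prime).
  L_p = Z/pZ[X,X^-1] is represented by Laurent series over Z/pZ with finite support;
  an n x n matrix over L_p is an element of ('p mod_ring fls)^'n^'n all of whose entries
  are Laurent polynomials.\<close>

definition laurent_poly :: "'a::zero fls \<Rightarrow> bool" where
  "laurent_poly f \<longleftrightarrow> finite {k. fls_nth f k \<noteq> 0}"

definition laurent_mat :: "'a::zero fls ^'n ^'m \<Rightarrow> bool" where
  "laurent_mat M \<longleftrightarrow> (\<forall>a b. laurent_poly (M $ a $ b))"

definition mat_support :: "'a::zero fls ^'n ^'m \<Rightarrow> int set" where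
  "mat_support M = {k. \<exists>a b. fls_nth (M $ a $ b) k \<noteq> 0}"

definition coeff_mat :: "'a::zero fls ^'n ^'m \<Rightarrow> int \<Rightarrow> 'a ^'n ^'m" where
  "coeff_mat M k = (\<chi> a b. fls_nth (M $ a $ b) k)"

text \<open>Linear CA with associated matrix M = sum_j A_j X^(-j):
  F(c)_i = sum_j A_j c_(i+j) = sum_k (coeff of X^k) c_(i-k).\<close>
definition lca :: "'a::comm_ring_1 fls ^'n ^'n \<Rightarrow> (int \<Rightarrow> 'a ^'n) \<Rightarrow> (int \<Rightarrow> 'a ^'n)" where
  "lca M c = (\<lambda>i. \<Sum>k\<in>mat_support M. coeff_mat M k *v c (i - k))"

definition cdist :: "(int \<Rightarrow> 'b) \<Rightarrow> (int \<Rightarrow> 'b) \<Rightarrow> real" where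
  "cdist c c' = (if c = c' then 0
     else (1/2) ^ (LEAST m::nat. \<exists>j. nat \<bar>j\<bar> = m \<and> c j \<noteq> c' j))"

definition pos_expansive :: "((int \<Rightarrow> 'b) \<Rightarrow> (int \<Rightarrow> 'b)) \<Rightarrow> bool" where
  "pos_expansive F \<longleftrightarrow> (\<exists>\<epsilon>>0. \<forall>c c'. c \<noteq> c' \<longrightarrow>
     (\<exists>l::nat. cdist ((F ^^ l) c) ((F ^^ l) c') \<ge> \<epsilon>))"

end

theory Submission
  imports Defs
begin

lemma fls_mult_nth_sum:
  fixes f g :: "'a::comm_ring_1 fls"
  assumes S: "finite S" and sup: "\<And>k. fls_nth f k \<noteq> 0 \<Longrightarrow> k \<in> S"
  shows "fls_nth (f * g) t = (\<Sum>k\<in>S. fls_nth f k * fls_nth g (t - k))"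
proof -
  define I where "I = {fls_subdegree f..t - fls_subdegree g}"
  have "fls_nth (f * g) t = (\<Sum>k\<in>I. fls_nth f k * fls_nth g (t - k))"
    unfolding I_def by (rule fls_times_nth(2))
  also have "\<dots> = (\<Sum>k\<in>S \<inter> I. fls_nth f k * fls_nth g (t - k))"
    by (rule sum.mono_neutral_right) (auto simp: I_def, metis mult_zero_left sup)
  also have "\<dots> = (\<Sum>k\<in>S. fls_nth f k * fls_nth g (t - k))"
  proof (rule sum.mono_neutral_left)
    show "\<forall>i\<in>S - S \<inter> I. fls_nth f i * fls_nth g (t - i) = 0"
    proof
      fix i assume "i \<in> S - S \<inter> I"
      then have "i < fls_subdegree f \<or> t - i < fls_subdegree g" by (auto simp: I_def)
      then show "fls_nth f i * fls_nth g (t - i) = 0" by auto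
    qed
  qed (use S in auto)
  finally show ?thesis .
qed

lemma laurent_poly_iff: "laurent_poly f \<longleftrightarrow> (\<exists>K::nat. \<forall>k. int K < \<bar>k\<bar> \<longrightarrow> fls_nth f k = 0)"
proof
  assume "laurent_poly f"
  then have fin: "finite {k. fls_nth f k \<noteq> 0}" by (simp add: laurent_poly_def)
  define K where "K = nat (Max (insert 0 (abs ` {k. fls_nth f k \<noteq> 0})))"
  have "\<forall>k. int K < \<bar>k\<bar> \<longrightarrow> fls_nth f k = 0"
  proof (intro allI impI)
    fix k assume "int K < \<bar>k\<bar>"
    show "fls_nth f k = 0"
    proof (rule ccontr)
      assume "fls_nth f k \<noteq> 0"
      then have "\<bar>k\<bar> \<le> Max (insert 0 (abs ` {k. fls_nth f k \<noteq> 0}))"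
        using fin by (intro Max_ge) auto
      with \<open>int K < \<bar>k\<bar>\<close> show False unfolding K_def by linarith
    qed
  qed
  then show "\<exists>K::nat. \<forall>k. int K < \<bar>k\<bar> \<longrightarrow> fls_nth f k = 0" by blast
next
  assume "\<exists>K::nat. \<forall>k. int K < \<bar>k\<bar> \<longrightarrow> fls_nth f k = 0"
  then obtain K :: nat where K: "\<forall>k. int K < \<bar>k\<bar> \<longrightarrow> fls_nth f k = 0" by blast
  have "{k. fls_nth f k \<noteq> 0} \<subseteq> {-int K..int K}" using K by force
  then show "laurent_poly f" unfolding laurent_poly_def by (rule finite_subset) simp
qed

lemma laurent_poly_add: "laurent_poly f \<Longrightarrow> laurent_poly g \<Longrightarrow> laurent_poly (f + g)"
  unfolding laurent_poly_def
  by (rule finite_subset[of _ "{k. fls_nth f k \<noteq> 0} \<union> {k. fls_nth g k \<noteq> 0}"]) auto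

lemma laurent_poly_0: "laurent_poly 0"
  unfolding laurent_poly_def by simp

lemma laurent_poly_of_int: "laurent_poly (of_int z :: 'a::comm_ring_1 fls)"
  unfolding laurent_poly_def
  by (rule finite_subset[of _ "{0}"]) (auto simp: fls_of_int_nth)

lemma laurent_poly_mult:
  fixes f g :: "'a::comm_ring_1 fls"
  assumes f: "laurent_poly f" and g: "laurent_poly g"
  shows "laurent_poly (f * g)"
proof -
  let ?S = "{k. fls_nth f k \<noteq> 0}" and ?T = "{k. fls_nth g k \<noteq> 0}"
  have fS: "finite ?S" "finite ?T" using f g by (auto simp: laurent_poly_def)
  have "{t. fls_nth (f * g) t \<noteq> 0} \<subseteq> (\<lambda>(a, b). a + b) ` (?S \<times> ?T)"
  proof
    fix t assume "t \<in> {t. fls_nth (f * g) t \<noteq> 0}"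
    then have "(\<Sum>k\<in>?S. fls_nth f k * fls_nth g (t - k)) \<noteq> 0"
      using fls_mult_nth_sum[OF fS(1), of f g t] by auto
    then obtain k where "k \<in> ?S" "fls_nth f k * fls_nth g (t - k) \<noteq> 0"
      by (meson sum.neutral)
    then have "(k, t - k) \<in> ?S \<times> ?T" by auto
    then show "t \<in> (\<lambda>(a, b). a + b) ` (?S \<times> ?T)" by force
  qed
  then show ?thesis unfolding laurent_poly_def
    by (rule finite_subset) (use fS in auto)
qed

lemma laurent_poly_sum:
  "(\<And>x. x \<in> A \<Longrightarrow> laurent_poly (f x)) \<Longrightarrow> laurent_poly (\<Sum>x\<in>A. f x)"
  by (induction A rule: infinite_finite_induct) (auto simp: laurent_poly_0 laurent_poly_add)

lemma laurent_poly_prod: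
  fixes f :: "_ \<Rightarrow> 'a::comm_ring_1 fls"
  shows "(\<And>x. x \<in> A \<Longrightarrow> laurent_poly (f x)) \<Longrightarrow> laurent_poly (\<Prod>x\<in>A. f x)"
  by (induction A rule: infinite_finite_induct)
     (auto simp: laurent_poly_mult laurent_poly_of_int[where z=1, simplified])

lemma laurent_poly_det:
  fixes M :: "'a::comm_ring_1 fls ^'n ^'n"
  assumes "laurent_mat M"
  shows "laurent_poly (det M)"
  unfolding det_def
  using assms by (auto intro!: laurent_poly_sum laurent_poly_mult laurent_poly_of_int laurent_poly_prod
      simp: laurent_mat_def)

definition bnd :: "nat \<Rightarrow> 'a::zero fls ^'n ^'m \<Rightarrow> bool" where
  "bnd K M \<longleftrightarrow> (\<forall>a b k. int K < \<bar>k\<bar> \<longrightarrow> fls_nth (M $ a $ b) k = 0)"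

lemma bnd_mono: "bnd K M \<Longrightarrow> K \<le> L \<Longrightarrow> bnd L M"
  unfolding bnd_def by force

lemma laurent_mat_bnd:
  fixes M :: "'a::zero fls ^'n ^'m"
  assumes "laurent_mat M" shows "\<exists>K. bnd K M"
proof -
  have "\<forall>ab. \<exists>K::nat. \<forall>k. int K < \<bar>k\<bar> \<longrightarrow> fls_nth (M $ fst ab $ snd ab) k = 0"
    using assms by (auto simp: laurent_mat_def laurent_poly_iff)
  then obtain Kf where Kf: "\<And>ab k. int (Kf ab) < \<bar>k\<bar> \<Longrightarrow> fls_nth (M $ fst ab $ snd ab) k = 0"
    by metis
  define K where "K = Max (range Kf)"
  have "bnd K M" unfolding bnd_def
  proof (intro allI impI)
    fix a b k assume "int K < \<bar>k\<bar>"
    moreover have "Kf (a, b) \<le> K" unfolding K_def by (rule Max_ge) auto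
    ultimately show "fls_nth (M $ a $ b) k = 0" using Kf[of "(a, b)" k] by simp
  qed
  then show ?thesis by blast
qed

lemma bnd_laurent_mat: "bnd K M \<Longrightarrow> laurent_mat M"
  unfolding laurent_mat_def laurent_poly_iff bnd_def by blast

lemma mat_support_bnd: "bnd K M \<Longrightarrow> mat_support M \<subseteq> {- int K..int K}"
  unfolding bnd_def mat_support_def by force

lemma lca_expand_vec:
  fixes M :: "'a::comm_ring_1 fls ^'n ^'n"
  assumes "bnd K M"
  shows "lca M c i = (\<Sum>k\<in>{- int K..int K}. coeff_mat M k *v c (i - k))"
  unfolding lca_def
proof (rule sum.mono_neutral_left)
  show "\<forall>k\<in>{- int K..int K} - mat_support M. coeff_mat M k *v c (i - k) = 0"
  proof
    fix k assume "k \<in> {- int K..int K} - mat_support M"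
    then have "coeff_mat M k = 0"
      by (auto simp: mat_support_def coeff_mat_def vec_eq_iff)
    then show "coeff_mat M k *v c (i - k) = 0" by simp
  qed
qed (use mat_support_bnd[OF assms] in auto)

lemma lca_expand:
  fixes M :: "'a::comm_ring_1 fls ^'n ^'n"
  assumes "bnd K M"
  shows "lca M c i $ a = (\<Sum>k\<in>{- int K..int K}. \<Sum>b\<in>UNIV. fls_nth (M $ a $ b) k * c (i - k) $ b)"
  unfolding lca_expand_vec[OF assms] sum_component
  by (simp add: matrix_vector_mult_def coeff_mat_def)

lemma bnd_nz: "bnd K M \<Longrightarrow> fls_nth (M $ a $ b) k \<noteq> 0 \<Longrightarrow> - int K \<le> k \<and> k \<le> int K"
  unfolding bnd_def by (metis abs_le_iff minus_le_iff not_less)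

lemma mult_entry:
  fixes M N :: "'a::comm_ring_1 fls ^'n ^'n"
  assumes "bnd K M"
  shows "fls_nth ((M ** N) $ a $ e) t =
     (\<Sum>b\<in>UNIV. \<Sum>k\<in>{- int K..int K}. fls_nth (M $ a $ b) k * fls_nth (N $ b $ e) (t - k))"
  unfolding matrix_matrix_mult_def vec_lambda_beta fls_nth_sum
  by (intro sum.cong refl fls_mult_nth_sum) (use bnd_nz[OF assms] in auto)

lemma bnd_mult:
  fixes M N :: "'a::comm_ring_1 fls ^'n ^'n"
  assumes M: "bnd K M" and N: "bnd L N"
  shows "bnd (K + L) (M ** N)"
  unfolding bnd_def
proof (intro allI impI)
  fix a e t assume t: "int (K + L) < \<bar>t\<bar>"
  show "fls_nth ((M ** N) $ a $ e) t = 0"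
    unfolding mult_entry[OF M]
  proof (intro sum.neutral ballI)
    fix b k assume "k \<in> {- int K..int K}"
    then have "int L < \<bar>t - k\<bar>" using t by auto
    then show "fls_nth (M $ a $ b) k * fls_nth (N $ b $ e) (t - k) = 0"
      using N by (simp add: bnd_def)
  qed
qed

lemma shift_sum:
  fixes h :: "int \<Rightarrow> 'a::comm_monoid_add"
  assumes h: "\<And>m. int L < \<bar>m\<bar> \<Longrightarrow> h m = 0" and k: "\<bar>k\<bar> \<le> int K"
  shows "(\<Sum>m\<in>{- int L..int L}. h m) = (\<Sum>t\<in>{- int (K + L)..int (K + L)}. h (t - k))"
proof -
  have "(\<Sum>t\<in>{- int (K + L)..int (K + L)}. h (t - k)) = (\<Sum>t\<in>(\<lambda>m. m + k) ` {- int L..int L}. h (t - k))"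
    by (rule sum.mono_neutral_right) (use k h in auto)
  also have "\<dots> = (\<Sum>m\<in>{- int L..int L}. h m)"
    by (subst sum.reindex) (auto simp: inj_on_def)
  finally show ?thesis by simp
qed

lemma swap4:
  "(\<Sum>t\<in>U. \<Sum>e\<in>E. \<Sum>b\<in>B. \<Sum>k\<in>S. F k b t e) = (\<Sum>k\<in>S. \<Sum>b\<in>B. \<Sum>t\<in>U. \<Sum>e\<in>E. F k b t e)"
proof -
  have "(\<Sum>t\<in>U. \<Sum>e\<in>E. \<Sum>b\<in>B. \<Sum>k\<in>S. F k b t e) = (\<Sum>t\<in>U. \<Sum>e\<in>E. \<Sum>k\<in>S. \<Sum>b\<in>B. F k b t e)"
    by (intro sum.cong refl) (rule sum.swap)
  also have "\<dots> = (\<Sum>t\<in>U. \<Sum>k\<in>S. \<Sum>e\<in>E. \<Sum>b\<in>B. F k b t e)"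
    by (intro sum.cong refl) (rule sum.swap)
  also have "\<dots> = (\<Sum>k\<in>S. \<Sum>t\<in>U. \<Sum>e\<in>E. \<Sum>b\<in>B. F k b t e)"
    by (rule sum.swap)
  also have "\<dots> = (\<Sum>k\<in>S. \<Sum>t\<in>U. \<Sum>b\<in>B. \<Sum>e\<in>E. F k b t e)"
    by (intro sum.cong refl) (rule sum.swap)
  also have "\<dots> = (\<Sum>k\<in>S. \<Sum>b\<in>B. \<Sum>t\<in>U. \<Sum>e\<in>E. F k b t e)"
    by (intro sum.cong refl) (rule sum.swap)
  finally show ?thesis .
qed

lemma lca_mult:
  fixes M N :: "'a::comm_ring_1 fls ^'n ^'n"
  assumes M: "bnd K M" and N: "bnd L N"
  shows "lca (M ** N) c = lca M (lca N c)"
proof (rule ext, subst vec_eq_iff, rule allI)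
  fix i a
  let ?S = "{- int K..int K}" and ?T = "{- int L..int L}" and ?U = "{- int (K + L)..int (K + L)}"
  have "lca (M ** N) c i $ a =
     (\<Sum>t\<in>?U. \<Sum>e\<in>UNIV. (\<Sum>b\<in>UNIV. \<Sum>k\<in>?S. fls_nth (M $ a $ b) k * fls_nth (N $ b $ e) (t - k)) * c (i - t) $ e)"
    unfolding lca_expand[OF bnd_mult[OF M N]] mult_entry[OF M] ..
  also have "\<dots> = (\<Sum>t\<in>?U. \<Sum>e\<in>UNIV. \<Sum>b\<in>UNIV. \<Sum>k\<in>?S. fls_nth (M $ a $ b) k * (fls_nth (N $ b $ e) (t - k) * c (i - t) $ e))"
    by (simp add: sum_distrib_right mult.assoc)
  also have "\<dots> = (\<Sum>k\<in>?S. \<Sum>b\<in>UNIV. \<Sum>t\<in>?U. \<Sum>e\<in>UNIV. fls_nth (M $ a $ b) k * (fls_nth (N $ b $ e) (t - k) * c (i - t) $ e))"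
    by (rule swap4)
  also have "\<dots> = (\<Sum>k\<in>?S. \<Sum>b\<in>UNIV. fls_nth (M $ a $ b) k * (\<Sum>t\<in>?U. \<Sum>e\<in>UNIV. fls_nth (N $ b $ e) (t - k) * c (i - t) $ e))"
    by (simp add: sum_distrib_left)
  also have "\<dots> = (\<Sum>k\<in>?S. \<Sum>b\<in>UNIV. fls_nth (M $ a $ b) k * (\<Sum>m\<in>?T. \<Sum>e\<in>UNIV. fls_nth (N $ b $ e) m * c (i - k - m) $ e))"
  proof (intro sum.cong refl)
    fix k b assume k: "k \<in> ?S"
    have "(\<Sum>m\<in>?T. \<Sum>e\<in>UNIV. fls_nth (N $ b $ e) m * c (i - k - m) $ e) =
      (\<Sum>t\<in>?U. \<Sum>e\<in>UNIV. fls_nth (N $ b $ e) (t - k) * c (i - k - (t - k)) $ e)"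
      by (rule shift_sum[where h = "\<lambda>m. \<Sum>e\<in>UNIV. fls_nth (N $ b $ e) m * c (i - k - m) $ e"])
         (use N k in \<open>auto simp: bnd_def\<close>)
    then show "fls_nth (M $ a $ b) k * (\<Sum>t\<in>?U. \<Sum>e\<in>UNIV. fls_nth (N $ b $ e) (t - k) * c (i - t) $ e) =
      fls_nth (M $ a $ b) k * (\<Sum>m\<in>?T. \<Sum>e\<in>UNIV. fls_nth (N $ b $ e) m * c (i - k - m) $ e)" by simp
  qed
  also have "\<dots> = lca M (lca N c) i $ a"
    unfolding lca_expand[OF M] lca_expand[OF N] ..
  finally show "lca (M ** N) c i $ a = lca M (lca N c) i $ a" .
qed

lemma lca_diff:
  fixes M :: "'a::comm_ring_1 fls ^'n ^'n"
  shows "lca M (\<lambda>i. x i - y i) = (\<lambda>i. lca M x i - lca M y i)"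
  unfolding lca_def by (simp add: matrix_vector_mult_diff_distrib sum_subtractf)

lemma lca_zero:
  fixes M :: "'a::comm_ring_1 fls ^'n ^'n"
  shows "lca M (\<lambda>i. 0) = (\<lambda>i. 0)"
  unfolding lca_def by simp

lemma lca_pow_diff:
  fixes M :: "'a::comm_ring_1 fls ^'n ^'n"
  shows "(lca M ^^ l) (\<lambda>i. x i - y i) = (\<lambda>i. (lca M ^^ l) x i - (lca M ^^ l) y i)"
  by (induction l) (simp_all add: lca_diff)

lemma lca_pow_zero:
  fixes M :: "'a::comm_ring_1 fls ^'n ^'n"
  shows "(lca M ^^ l) (\<lambda>i. 0) = (\<lambda>i. 0)"
  by (induction l) (simp_all add: lca_zero)

definition pew :: "((int \<Rightarrow> 'b::zero) \<Rightarrow> (int \<Rightarrow> 'b)) \<Rightarrow> bool" where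
  "pew F \<longleftrightarrow> (\<exists>r::nat. \<forall>c. c \<noteq> (\<lambda>_. 0) \<longrightarrow> (\<exists>l j. \<bar>j\<bar> \<le> int r \<and> (F ^^ l) c j \<noteq> 0))"

lemma cdist_eq: "x \<noteq> y \<Longrightarrow> cdist x y = (1/2) ^ (LEAST m::nat. \<exists>j. nat \<bar>j\<bar> = m \<and> x j \<noteq> y j)"
  unfolding cdist_def by (rule if_not_P)

lemma cdist_ge:
  assumes "\<bar>j\<bar> \<le> int r" "x j \<noteq> y j"
  shows "cdist x y \<ge> (1/2) ^ r"
proof -
  have ne: "x \<noteq> y" using assms by auto
  define m where "m = (LEAST m::nat. \<exists>j. nat \<bar>j\<bar> = m \<and> x j \<noteq> y j)"
  have "m \<le> nat \<bar>j\<bar>"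
    unfolding m_def by (rule Least_le) (use assms in blast)
  also have "\<dots> \<le> r" using assms by simp
  finally have "m \<le> r" .
  then have "(1/2::real) ^ r \<le> (1/2) ^ m" by (intro power_decreasing) auto
  then show ?thesis using cdist_eq[OF ne] unfolding m_def by simp
qed

lemma cdist_small:
  assumes "cdist x y > (1/2) ^ r"
  shows "\<exists>j. \<bar>j\<bar> < int r \<and> x j \<noteq> y j"
proof -
  have ne: "x \<noteq> y" using assms unfolding cdist_def by auto
  then obtain j0 where "x j0 \<noteq> y j0" by auto
  then have ex: "\<exists>j. nat \<bar>j\<bar> = nat \<bar>j0\<bar> \<and> x j \<noteq> y j" by blast
  define m where "m = (LEAST m::nat. \<exists>j. nat \<bar>j\<bar> = m \<and> x j \<noteq> y j)"
  have "\<exists>j. nat \<bar>j\<bar> = m \<and> x j \<noteq> y j"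
    unfolding m_def by (rule LeastI[of _ "nat \<bar>j0\<bar>"]) (rule ex)
  then obtain j where j: "nat \<bar>j\<bar> = m" "x j \<noteq> y j" by blast
  have "(1/2::real) ^ m > (1/2) ^ r" using assms cdist_eq[OF ne] unfolding m_def by simp
  then have "m < r" by (simp add: power_strict_decreasing_iff)
  then have "\<bar>j\<bar> < int r" using j(1) nat_less_iff[of "\<bar>j\<bar>" r] by simp
  with j show ?thesis by blast
qed

lemma pe_iff_pew:
  fixes M :: "'a::comm_ring_1 fls ^'n ^'n"
  shows "pos_expansive (lca M) \<longleftrightarrow> pew (lca M)"
proof
  assume "pos_expansive (lca M)"
  then obtain \<epsilon> :: real where e: "\<epsilon> > 0"
    and pe: "\<And>c c'. c \<noteq> c' \<Longrightarrow> \<exists>l. cdist ((lca M ^^ l) c) ((lca M ^^ l) c') \<ge> \<epsilon>"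
    unfolding pos_expansive_def by blast
  obtain r where r: "(1/2::real) ^ r < \<epsilon>"
    using real_arch_pow_inv[OF e, of "1/2"] by auto
  have "\<forall>c. c \<noteq> (\<lambda>_. 0) \<longrightarrow> (\<exists>l j. \<bar>j\<bar> \<le> int r \<and> (lca M ^^ l) c j \<noteq> 0)"
  proof (intro allI impI)
    fix c :: "int \<Rightarrow> 'a ^'n" assume "c \<noteq> (\<lambda>_. 0)"
    then obtain l where "cdist ((lca M ^^ l) c) ((lca M ^^ l) (\<lambda>_. 0)) \<ge> \<epsilon>" using pe by blast
    then have "cdist ((lca M ^^ l) c) (\<lambda>_. 0) > (1/2) ^ r" using r by (simp add: lca_pow_zero)
    then obtain j where "\<bar>j\<bar> < int r" "(lca M ^^ l) c j \<noteq> 0" using cdist_small by fastforce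
    then show "\<exists>l j. \<bar>j\<bar> \<le> int r \<and> (lca M ^^ l) c j \<noteq> 0" by force
  qed
  then show "pew (lca M)" unfolding pew_def by blast
next
  assume "pew (lca M)"
  then obtain r :: nat where r: "\<And>c. c \<noteq> (\<lambda>_. 0) \<Longrightarrow> \<exists>l j. \<bar>j\<bar> \<le> int r \<and> (lca M ^^ l) c j \<noteq> 0"
    unfolding pew_def by blast
  have "\<forall>c c'. c \<noteq> c' \<longrightarrow> (\<exists>l::nat. cdist ((lca M ^^ l) c) ((lca M ^^ l) c') \<ge> (1/2) ^ r)"
  proof (intro allI impI)
    fix c c' :: "int \<Rightarrow> 'a ^'n" assume "c \<noteq> c'"
    then have "(\<lambda>i. c i - c' i) \<noteq> (\<lambda>_. 0)" by (metis eq_iff_diff_eq_0 ext)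
    then obtain l j where "\<bar>j\<bar> \<le> int r" "(lca M ^^ l) (\<lambda>i. c i - c' i) j \<noteq> 0" using r by blast
    then have "\<bar>j\<bar> \<le> int r" "(lca M ^^ l) c j \<noteq> (lca M ^^ l) c' j" by (auto simp: lca_pow_diff)
    then show "\<exists>l::nat. cdist ((lca M ^^ l) c) ((lca M ^^ l) c') \<ge> (1/2) ^ r"
      using cdist_ge by blast
  qed
  then show "pos_expansive (lca M)" unfolding pos_expansive_def
    by (intro exI[of _ "(1/2::real) ^ r"]) auto
qed

lemma mat_mult_left: "mat a ** (M :: 'a::comm_ring_1 ^'n ^'m) = (\<chi> i j. a * M $ i $ j)"
  by (simp add: vec_eq_iff matrix_matrix_mult_def mat_def if_distrib[where f="\<lambda>x. x * _"] cong: if_cong)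

lemma mat_mult_right: "(M :: 'a::comm_ring_1 ^'n ^'m) ** mat a = (\<chi> i j. a * M $ i $ j)"
  by (simp add: vec_eq_iff matrix_matrix_mult_def mat_def if_distrib mult.commute cong: if_cong)

lemma mat_mult_mat: "mat a ** (mat b :: 'a::comm_ring_1 ^'n ^'n) = mat (a * b)"
  by (simp add: mat_mult_left) (simp add: mat_def vec_eq_iff)

lemma mat_comm: "mat a ** (M :: 'a::comm_ring_1 ^'n ^'n) = M ** mat a"
  by (simp add: mat_mult_left mat_mult_right)

lemma kernel_up:
  fixes \<delta> x :: "int \<Rightarrow> 'a::field"
  assumes bd: "\<And>k. int K < \<bar>k\<bar> \<Longrightarrow> \<delta> k = 0" and nz: "\<delta> k1 \<noteq> 0"
    and eq: "\<And>i. (\<Sum>k\<in>{- int K..int K}. \<delta> k * x (i - k)) = 0"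
    and win: "\<And>j. \<bar>j\<bar> \<le> 2 * int K \<Longrightarrow> x j = 0"
  shows "x (int n) = 0"
proof -
  let ?S = "{- int K..int K}"
  let ?Z = "{k\<in>?S. \<delta> k \<noteq> 0}"
  have k1S: "k1 \<in> ?S" using bd nz by (metis abs_le_iff atLeastAtMost_iff minus_le_iff not_less)
  have finZ: "finite ?Z" by (rule finite_subset[of _ ?S]) auto
  have neZ: "?Z \<noteq> {}" using k1S nz by blast
  define k0 where "k0 = Min ?Z"
  have k0Z: "k0 \<in> ?Z" unfolding k0_def using finZ neZ by (rule Min_in)
  have k0le: "\<And>k. k \<in> ?S \<Longrightarrow> \<delta> k \<noteq> 0 \<Longrightarrow> k0 \<le> k" unfolding k0_def using finZ by (intro Min_le) auto
  show ?thesis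
  proof (induction n rule: less_induct)
    case (less n)
    show ?case
    proof (cases "int n \<le> 2 * int K")
      case True then show ?thesis using win by simp
    next
      case False
      have "(\<Sum>k\<in>?S. \<delta> k * x (int n + k0 - k)) = 0" using eq[of "int n + k0"] by simp
      also have "(\<Sum>k\<in>?S. \<delta> k * x (int n + k0 - k)) = \<delta> k0 * x (int n + k0 - k0) + (\<Sum>k\<in>?S - {k0}. \<delta> k * x (int n + k0 - k))"
        using k0Z by (subst sum.remove[of _ k0]) auto
      also have "(\<Sum>k\<in>?S - {k0}. \<delta> k * x (int n + k0 - k)) = 0"
      proof (intro sum.neutral ballI)
        fix k assume k: "k \<in> ?S - {k0}"
        show "\<delta> k * x (int n + k0 - k) = 0"
        proof (cases "\<delta> k = 0")
          case False
          then have "k0 < k" using k k0le[of k] by auto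
          moreover have "k0 \<ge> - int K" "k \<le> int K" using k0Z k by auto
          ultimately have lt: "nat (int n + k0 - k) < n" and ge: "int n + k0 - k \<ge> 0" using \<open>\<not> int n \<le> 2 * int K\<close> by auto
          have "x (int (nat (int n + k0 - k))) = 0" using less.IH[OF lt] .
          then show ?thesis using ge by simp
        qed simp
      qed
      finally have "\<delta> k0 * x (int n) = 0" by simp
      then show ?thesis using k0Z by simp
    qed
  qed
qed

lemma kernel_all:
  fixes \<delta> x :: "int \<Rightarrow> 'a::field"
  assumes bd: "\<And>k. int K < \<bar>k\<bar> \<Longrightarrow> \<delta> k = 0" and nz: "\<delta> k1 \<noteq> 0"
    and eq: "\<And>i. (\<Sum>k\<in>{- int K..int K}. \<delta> k * x (i - k)) = 0"
    and win: "\<And>j. \<bar>j\<bar> \<le> 2 * int K \<Longrightarrow> x j = 0"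
  shows "x j = 0"
proof (cases "j \<ge> 0")
  case True
  then show ?thesis using kernel_up[OF bd nz eq win, of "nat j"] by simp
next
  case False
  have eq': "(\<Sum>k\<in>{- int K..int K}. \<delta> (- k) * x (- (i - k))) = 0" for i
  proof -
    have "(\<Sum>k\<in>{- int K..int K}. \<delta> (- k) * x (- (i - k))) = (\<Sum>k\<in>{- int K..int K}. \<delta> k * x (- i - k))"
      by (rule sum.reindex_bij_witness[of _ uminus uminus]) auto
    also have "\<dots> = 0" by (rule eq)
    finally show ?thesis .
  qed
  have all: "x (- int n) = 0" for n
    using kernel_up[of K "\<lambda>k. \<delta> (- k)" "- k1" "\<lambda>j. x (- j)", OF _ _ eq'] bd nz win by auto
  show ?thesis using all[of "nat (- j)"] False by simp
qed

lemma lca_mat_expand: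
  fixes d :: "'a::comm_ring_1 fls"
  assumes "bnd K (mat d :: 'a fls ^'n ^'n)"
  shows "lca (mat d :: 'a fls ^'n ^'n) c i $ a = (\<Sum>k\<in>{- int K..int K}. fls_nth d k * c (i - k) $ a)"
  unfolding lca_expand[OF assms]
  by (intro sum.cong refl) (simp add: mat_def if_distrib[where f="\<lambda>x. fls_nth x _"] if_distrib[where f="\<lambda>x. x * _"] cong: if_cong)

lemma kernel_mat:
  fixes d :: "'a::field fls"
  assumes bd: "bnd K (mat d :: 'a fls ^'n ^'n)" and d: "d \<noteq> 0"
    and ker: "lca (mat d :: 'a fls ^'n ^'n) c = (\<lambda>_. 0)"
    and win: "\<And>j. \<bar>j\<bar> \<le> 2 * int K \<Longrightarrow> c j = 0"
  shows "c = (\<lambda>_. 0)"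
proof -
  obtain k1 where k1: "fls_nth d k1 \<noteq> 0"
    using d by (metis fls_eqI fls_zero_nth)
  have bd': "\<And>k. int K < \<bar>k\<bar> \<Longrightarrow> fls_nth d k = 0"
  proof -
    fix k :: int assume "int K < \<bar>k\<bar>"
    then have "fls_nth ((mat d :: 'a fls ^'n ^'n) $ undefined $ undefined) k = 0"
      using bd unfolding bnd_def by blast
    then show "fls_nth d k = 0" by (simp add: mat_def)
  qed
  have "c j $ a = 0" for j a
  proof (rule kernel_all[of K "fls_nth d" k1 "\<lambda>j. c j $ a", OF bd' k1])
    fix i
    have "lca (mat d :: 'a fls ^'n ^'n) c i $ a = 0" using ker by simp
    then show "(\<Sum>k\<in>{- int K..int K}. fls_nth d k * c (i - k) $ a) = 0"
      unfolding lca_mat_expand[OF bd] .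
  next
    fix j :: int assume "\<bar>j\<bar> \<le> 2 * int K"
    then show "c j $ a = 0" using win by simp
  qed
  then show ?thesis by (auto simp: vec_eq_iff)
qed

lemma commute_pow:
  fixes A B Q :: "'a::comm_ring_1 fls ^'n ^'n"
  assumes "\<And>c. lca A (lca Q c) = lca Q (lca B c)"
  shows "(lca A ^^ l) (lca Q c) = lca Q ((lca B ^^ l) c)"
  by (induction l) (simp_all add: assms)

lemma one_dir:
  fixes A B Q R :: "'a::field fls ^'n ^'n"
  assumes A: "laurent_mat A" and B: "laurent_mat B" and Q: "laurent_mat Q" and R: "laurent_mat R"
    and AQ: "A ** Q = Q ** B" and RQ: "R ** Q = mat d" and d: "d \<noteq> 0"
    and pA: "pew (lca A)"
  shows "pew (lca B)"
proof -
  obtain KA where KA: "bnd KA A" using laurent_mat_bnd[OF A] by blast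
  obtain KB where KB: "bnd KB B" using laurent_mat_bnd[OF B] by blast
  obtain KQ where KQ: "bnd KQ Q" using laurent_mat_bnd[OF Q] by blast
  obtain KR where KR: "bnd KR R" using laurent_mat_bnd[OF R] by blast
  define K' where "K' = KR + KQ"
  have Kd: "bnd K' (mat d :: 'a fls ^'n ^'n)" unfolding K'_def using bnd_mult[OF KR KQ] RQ by simp
  have comm: "lca A (lca Q c) = lca Q (lca B c)" for c
    using lca_mult[OF KA KQ, of c] lca_mult[OF KQ KB, of c] AQ by simp
  obtain r :: nat where r: "\<And>c. c \<noteq> (\<lambda>_. 0) \<Longrightarrow> \<exists>l j. \<bar>j\<bar> \<le> int r \<and> (lca A ^^ l) c j \<noteq> 0"
    using pA unfolding pew_def by blast
  define r' where "r' = max (r + KQ) (2 * K')"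
  have "\<exists>l j. \<bar>j\<bar> \<le> int r' \<and> (lca B ^^ l) c j \<noteq> 0" if c: "c \<noteq> (\<lambda>_. 0)" for c
  proof (cases "lca Q c = (\<lambda>_. 0)")
    case True
    have "lca (mat d) c = lca R (lca Q c)" using lca_mult[OF KR KQ] RQ by simp
    also have "\<dots> = (\<lambda>_. 0)" using True lca_zero by simp
    finally have ker: "lca (mat d :: 'a fls ^'n ^'n) c = (\<lambda>_. 0)" .
    have "\<exists>j. \<bar>j\<bar> \<le> 2 * int K' \<and> c j \<noteq> 0"
    proof (rule ccontr)
      assume "\<nexists>j. \<bar>j\<bar> \<le> 2 * int K' \<and> c j \<noteq> 0"
      then have "c = (\<lambda>_. 0)" using kernel_mat[OF Kd d ker] by blast
      with c show False by simp
    qed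
    then obtain j where "\<bar>j\<bar> \<le> 2 * int K'" "c j \<noteq> 0" by blast
    then show ?thesis unfolding r'_def by (intro exI[of _ 0] exI[of _ j]) auto
  next
    case False
    then obtain l j where j: "\<bar>j\<bar> \<le> int r" "(lca A ^^ l) (lca Q c) j \<noteq> 0" using r by blast
    define y where "y = (lca B ^^ l) c"
    have "lca Q y j \<noteq> 0" using j(2) unfolding y_def commute_pow[OF comm] .
    then have "(\<Sum>k\<in>{- int KQ..int KQ}. coeff_mat Q k *v y (j - k)) \<noteq> 0"
      unfolding lca_expand_vec[OF KQ] .
    then obtain k where k: "k \<in> {- int KQ..int KQ}" "coeff_mat Q k *v y (j - k) \<noteq> 0"
      by (meson sum.neutral)
    then have "y (j - k) \<noteq> 0" by auto
    moreover have "\<bar>j - k\<bar> \<le> int r'" using k(1) j(1) unfolding r'_def by auto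
    ultimately show ?thesis unfolding y_def by blast
  qed
  then show ?thesis unfolding pew_def by blast
qed

lemma laurent_poly_1: "laurent_poly (1 :: 'a::comm_ring_1 fls)"
  using laurent_poly_of_int[where z=1] by simp

definition adjm :: "'a::comm_ring_1 ^'n ^'n \<Rightarrow> 'a ^'n ^'n" where
  "adjm Q = (\<chi> k i. det (\<chi> r. if r = k then axis i 1 else row r (transpose Q)))"

lemma adjm_mult: "adjm Q ** Q = mat (det Q)"
proof -
  let ?P = "transpose Q"
  have "(adjm Q ** Q) $ k $ j = (if k = j then det Q else 0)" for k j
  proof -
    have "(adjm Q ** Q) $ k $ j = (\<Sum>i\<in>UNIV. Q $ i $ j * det (\<chi> r. if r = k then axis i 1 else row r ?P))"
      by (simp add: adjm_def matrix_matrix_mult_def mult.commute)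
    also have "\<dots> = (\<Sum>i\<in>UNIV. det (\<chi> r. if r = k then Q $ i $ j *s axis i 1 else row r ?P))"
      by (simp add: det_row_mul)
    also have "\<dots> = det (\<chi> r. if r = k then (\<Sum>i\<in>UNIV. Q $ i $ j *s axis i 1) else row r ?P)"
      by (rule det_linear_row_sum[symmetric]) simp
    also have "(\<Sum>i\<in>UNIV. Q $ i $ j *s axis i 1) = row j ?P"
      by (simp add: vec_eq_iff sum_component row_def transpose_def axis_def if_distrib cong: if_cong)
    also have "det (\<chi> r. if r = k then row j ?P else row r ?P) = (if k = j then det Q else 0)"
    proof (cases "k = j")
      case True
      then have "(\<chi> r. if r = k then row j ?P else row r ?P) = ?P" by (simp add: vec_eq_iff row_def)
      then show ?thesis using True by simp
    next
      case False
      have "det (\<chi> r. if r = k then row j ?P else row r ?P) = 0"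
        by (rule det_identical_rows[OF False]) (simp add: row_def vec_eq_iff False[symmetric])
      then show ?thesis using False by simp
    qed
    finally show ?thesis .
  qed
  then show ?thesis by (simp add: vec_eq_iff mat_def)
qed

lemma laurent_adjm:
  fixes Q :: "'a::comm_ring_1 fls ^'n ^'n"
  assumes "laurent_mat Q" shows "laurent_mat (adjm Q)"
  unfolding laurent_mat_def adjm_def
proof (intro allI, simp)
  fix k i
  show "laurent_poly (det (\<chi> r. if r = k then axis i 1 else row r (transpose Q)))"
    by (rule laurent_poly_det) (use assms in \<open>auto simp: laurent_mat_def row_def transpose_def axis_def laurent_poly_1 laurent_poly_0\<close>)
qed

lemma reverse_rel:
  fixes A B Q R :: "'a::field fls ^'n ^'n"
  assumes AQ: "A ** Q = Q ** B" and RQ: "R ** Q = mat d" and d: "d \<noteq> 0"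
  shows "Q ** R = mat d" and "B ** R = R ** A"
proof -
  define X where "X = mat (inverse d) ** R"
  have XQ: "X ** Q = mat 1"
    unfolding X_def by (simp add: matrix_mul_assoc[symmetric] RQ mat_mult_mat d)
  then obtain Y where QY: "Q ** Y = mat 1" using matrix_left_right_inverse by blast
  have "X = X ** (Q ** Y)" by (simp add: QY)
  also have "\<dots> = Y" by (simp add: matrix_mul_assoc XQ)
  finally have QX: "Q ** X = mat 1" using QY by simp
  have RX: "R = mat d ** X"
    unfolding X_def by (simp add: matrix_mul_assoc mat_mult_mat d right_inverse)
  show QR: "Q ** R = mat d"
    unfolding RX mat_comm[of d X] by (simp add: matrix_mul_assoc QX)
  have "(R ** A) ** mat d = (R ** A) ** (Q ** R)" by (simp add: QR)
  also have "\<dots> = R ** (A ** Q) ** R" by (simp add: matrix_mul_assoc)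
  also have "\<dots> = (R ** Q) ** B ** R" by (simp add: AQ matrix_mul_assoc)
  also have "\<dots> = mat d ** (B ** R)" by (simp add: RQ matrix_mul_assoc)
  also have "\<dots> = (B ** R) ** mat d" by (rule mat_comm)
  finally have "(R ** A) ** mat d = (B ** R) ** mat d" .
  then have "(R ** A) ** mat d ** mat (inverse d) = (B ** R) ** mat d ** mat (inverse d)" by simp
  then show "B ** R = R ** A"
    by (simp add: matrix_mul_assoc[symmetric] mat_mult_mat d right_inverse)
qed

theorem lemma8:
  fixes A B Q :: "'p::prime_card mod_ring fls ^'n ^'n"
  assumes "laurent_mat A" and "laurent_mat B" and "laurent_mat Q"
    and "det Q \<noteq> 0"
    and "A ** Q = Q ** B"
  shows "pos_expansive (lca A) \<longleftrightarrow> pos_expansive (lca B)"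
proof -
  define R where "R = adjm Q"
  have RQ: "R ** Q = mat (det Q)" unfolding R_def by (rule adjm_mult)
  have LR: "laurent_mat R" unfolding R_def by (rule laurent_adjm[OF assms(3)])
  have QR: "Q ** R = mat (det Q)" and BR: "B ** R = R ** A"
    using reverse_rel[OF assms(5) RQ assms(4)] by auto
  have "pew (lca A) \<longleftrightarrow> pew (lca B)"
  proof
    assume "pew (lca A)"
    then show "pew (lca B)" using one_dir[OF assms(1,2,3) LR assms(5) RQ assms(4)] by blast
  next
    assume "pew (lca B)"
    then show "pew (lca A)" using one_dir[OF assms(2,1) LR assms(3) BR QR assms(4)] by blast
  qed
  then show ?thesis by (simp add: pe_iff_pew)
qed

end
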